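(* Let $\mathcal{G}$ be a connected undirected weighted graph (nonzero real weights, possibly negative) such that $L(\mathcal{G})$ has exactly one zero eigenvalue. Let $\mathcal{T}$ be a spanning tree with cycle subgraph $\mathcal{C}$. Then $R_{(\mathcal{T},\mathcal{C})}WR_{(\mathcal{T},\mathcal{C})}^T$ and $L_{ess}(\mathcal{T})$ are invertible and the Moore–Penrose pseudo-inverse of $L(\mathcal{G})$ is $$L^{\dagger}(\mathcal{G})=(E_{\mathcal{T}}^L)^T\big(R_{(\mathcal{T},\mathcal{C})}WR_{(\mathcal{T},\mathcal{C})}^T\big)^{-1}E_{\mathcal{T}}^L=(E_{\mathcal{T}}^L)^T L_{ess}(\mathcal{T})^{-1}E_{\mathcal{T}}^T,$$ where $E_{\mathcal{T}}^L=L_e(\mathcal{T})^{-1}E_{\mathcal{T}}^T$.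
   Context: A weighted graph $\mathcal{G}=(\mathcal{V},\mathcal{E},\mathcal{W})$ has weights $\mathcal{W}:\mathcal{E}\to\mathbb{R}\setminus\{0\}$ collected in the diagonal matrix $W$. With an arbitrary edge orientation, the incidence matrix $E$ has in the column of edge $(i,j)$ entry $+1$ in row $i$, $-1$ in row $j$, $0$ elsewhere; $L(\mathcal{G})=EWE^T$. For a spanning tree $\mathcal{T}$, $\mathcal{C}$ is the subgraph of the remaining edges, edges ordered so $E=[E_{\mathcal{T}}\ E_{\mathcal{C}}]$ and $W$ correspondingly. $L_e(\mathcal{T})=E_{\mathcal{T}}^TE_{\mathcal{T}}$ (invertible), $E_{\mathcal{T}}^L=L_e(\mathcal{T})^{-1}E_{\mathcal{T}}^T$ is a left inverse of $E_{\mathcal{T}}$, $R_{(\mathcal{T},\mathcal{C})}=[\,I\ \ L_e(\mathcal{T})^{-1}E_{\mathcal{T}}^TE_{\mathcal{C}}\,]$, and $L_{ess}(\mathcal{T})=L_e(\mathcal{T})R_{(\mathcal{T},\mathcal{C})}WR_{(\mathcal{T},\mathcal{C})}^T$. *)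

theory Defs
  imports "Jordan_Normal_Form.Char_Poly"
begin

text \<open>Graphs: vertices are 0,...,n-1; edges are given as a list of ordered pairs (u,v)
  (the order fixes the arbitrary orientation, the position in the list fixes the edge ordering).\<close>

definition edge_adj :: "(nat \<times> nat) list \<Rightarrow> (nat \<times> nat) set" where
  "edge_adj es = {(u,v). (u,v) \<in> set es \<or> (v,u) \<in> set es}"

definition simple_graph :: "nat \<Rightarrow> (nat \<times> nat) list \<Rightarrow> bool" where
  "simple_graph n es \<longleftrightarrow> (\<forall>(u,v)\<in>set es. u < n \<and> v < n \<and> u \<noteq> v)
      \<and> distinct (map (\<lambda>(u,v). {u,v}) es)"

definition graph_connected :: "nat \<Rightarrow> (nat \<times> nat) list \<Rightarrow> bool" where
  "graph_connected n es \<longleftrightarrow> (\<forall>u<n. \<forall>v<n. (u,v) \<in> (edge_adj es)\<^sup>*)"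

text \<open>Acyclic: every edge is a bridge (removing it disconnects its endpoints).\<close>
definition acyclic_graph :: "(nat \<times> nat) list \<Rightarrow> bool" where
  "acyclic_graph es \<longleftrightarrow> (\<forall>k < length es.
      (fst (es ! k), snd (es ! k)) \<notin> (edge_adj (take k es @ drop (Suc k) es))\<^sup>*)"

definition spanning_tree :: "nat \<Rightarrow> (nat \<times> nat) list \<Rightarrow> bool" where
  "spanning_tree n es \<longleftrightarrow> graph_connected n es \<and> acyclic_graph es"

definition incidence :: "nat \<Rightarrow> (nat \<times> nat) list \<Rightarrow> real mat" where
  "incidence n es = mat n (length es)
     (\<lambda>(i,k). if fst (es ! k) = i then 1 else if snd (es ! k) = i then -1 else 0)"

definition weight_mat :: "real list \<Rightarrow> real mat" where
  "weight_mat ws = mat_diag (length ws) (\<lambda>i. ws ! i)"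

definition laplacian :: "nat \<Rightarrow> (nat \<times> nat) list \<Rightarrow> real list \<Rightarrow> real mat" where
  "laplacian n es ws = incidence n es * weight_mat ws * transpose_mat (incidence n es)"

definition append_cols :: "real mat \<Rightarrow> real mat \<Rightarrow> real mat" where
  "append_cols A B = mat (dim_row A) (dim_col A + dim_col B)
     (\<lambda>(i,j). if j < dim_col A then A $$ (i,j) else B $$ (i, j - dim_col A))"

definition minv :: "real mat \<Rightarrow> real mat" where
  "minv A = (THE B. B \<in> carrier_mat (dim_row A) (dim_row A)
               \<and> A * B = 1\<^sub>m (dim_row A) \<and> B * A = 1\<^sub>m (dim_row A))"

definition pinv :: "real mat \<Rightarrow> real mat" where
  "pinv A = (THE X. X \<in> carrier_mat (dim_col A) (dim_row A)
      \<and> A * X * A = A \<and> X * A * X = X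
      \<and> transpose_mat (A * X) = A * X \<and> transpose_mat (X * A) = X * A)"

definition edge_laplacian_T :: "nat \<Rightarrow> (nat \<times> nat) list \<Rightarrow> real mat" where
  "edge_laplacian_T n eT = transpose_mat (incidence n eT) * incidence n eT"

definition left_inv_T :: "nat \<Rightarrow> (nat \<times> nat) list \<Rightarrow> real mat" where
  "left_inv_T n eT = minv (edge_laplacian_T n eT) * transpose_mat (incidence n eT)"

definition R_TC :: "nat \<Rightarrow> (nat \<times> nat) list \<Rightarrow> (nat \<times> nat) list \<Rightarrow> real mat" where
  "R_TC n eT eC = append_cols (1\<^sub>m (length eT))
      (minv (edge_laplacian_T n eT) * transpose_mat (incidence n eT) * incidence n eC)"

definition L_ess :: "nat \<Rightarrow> (nat \<times> nat) list \<Rightarrow> (nat \<times> nat) list \<Rightarrow> real list \<Rightarrow> real mat" where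
  "L_ess n eT eC ws = edge_laplacian_T n eT *
      (R_TC n eT eC * weight_mat ws * transpose_mat (R_TC n eT eC))"

end

theory Submission
  imports Defs
begin

lemma inc_carrier[simp]: "incidence n es \<in> carrier_mat n (length es)"
  unfolding incidence_def by auto
lemma inc_dims[simp]: "dim_row (incidence n es) = n" "dim_col (incidence n es) = length es"
  unfolding incidence_def by auto
lemma inc_index[simp]: "i < n \<Longrightarrow> k < length es \<Longrightarrow> incidence n es $$ (i,k) =
   (if fst (es ! k) = i then 1 else if snd (es ! k) = i then -1 else 0)"
  unfolding incidence_def by auto

lemma sum_edge_ind:
  assumes "finite B" "f \<noteq> s"
  shows "(\<Sum>i\<in>B. (if f = i then 1 else if s = i then -1 else 0::real)) =
     (if f \<in> B then 1 else 0) - (if s \<in> B then 1 else 0)"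
proof -
  have "(\<Sum>i\<in>B. (if f = i then 1 else if s = i then -1 else 0::real)) =
     (\<Sum>i\<in>B. (if f = i then 1 else 0) - (if s = i then 1 else 0))"
    by (rule sum.cong) (use assms in auto)
  also have "\<dots> = (if f \<in> B then 1 else 0) - (if s \<in> B then 1 else 0)"
    using assms(1) by (simp add: sum_subtractf)
  finally show ?thesis .
qed

lemma inc_col_sum_const:
  assumes "\<forall>(u,v)\<in>set es. u < n \<and> v < n \<and> u \<noteq> v"
  shows "transpose_mat (incidence n es) *\<^sub>v vec n (\<lambda>_. c) = 0\<^sub>v (length es)"
proof (rule eq_vecI)
  fix p assume "p < dim_vec (0\<^sub>v (length es) :: real vec)"
  hence p: "p < length es" by simp
  obtain u v where uv: "es ! p = (u,v)" by fastforce
  with p assms have u: "u < n" "v < n" "u \<noteq> v" using nth_mem by fastforce+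
  have fs: "fst (es ! p) = u" "snd (es ! p) = v" using uv by auto
  have "(transpose_mat (incidence n es) *\<^sub>v vec n (\<lambda>_. c)) $ p
     = (\<Sum>i<n. incidence n es $$ (i,p) * c)"
    using p by (simp add: scalar_prod_def atLeast0LessThan)
  also have "\<dots> = (\<Sum>i<n. (if u = i then 1 else if v = i then -1 else 0) * c)"
    by (rule sum.cong) (use p fs in auto)
  also have "\<dots> = (\<Sum>i<n. (if u = i then 1 else if v = i then -1 else 0)) * c"
    by (simp add: sum_distrib_right)
  also have "\<dots> = 0" by (subst sum_edge_ind) (use u in auto)
  finally show "(transpose_mat (incidence n es) *\<^sub>v vec n (\<lambda>_. c)) $ p = 0\<^sub>v (length es) $ p"
    using p by simp
qed simp

lemma nth_in_rest:
  assumes "q < length xs" "q \<noteq> p"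
  shows "xs ! q \<in> set (take p xs @ drop (Suc p) xs)"
proof (cases "q < p")
  case True
  then have "take p xs ! q = xs ! q" by simp
  moreover have "q < length (take p xs)" using True assms by simp
  ultimately show ?thesis by (metis Un_iff nth_mem set_append)
next
  case False
  then have qp: "q > p" using assms by simp
  then have "drop (Suc p) xs ! (q - Suc p) = xs ! q" using assms by simp
  moreover have "q - Suc p < length (drop (Suc p) xs)" using qp assms by simp
  ultimately show ?thesis by (metis Un_iff nth_mem set_append)
qed

lemma tree_inj:
  assumes ac: "acyclic_graph eT" and valid: "\<forall>(u,v)\<in>set eT. u<n \<and> v<n \<and> u\<noteq>v"
  and z: "z \<in> carrier_vec (length eT)" and Ez: "incidence n eT *\<^sub>v z = 0\<^sub>v n"
  shows "z = 0\<^sub>v (length eT)"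
proof (rule eq_vecI)
  fix p assume "p < dim_vec (0\<^sub>v (length eT) :: real vec)"
  hence p: "p < length eT" by simp
  define m where "m = length eT"
  define rest where "rest = take p eT @ drop (Suc p) eT"
  define a where "a = fst (eT ! p)"
  define b where "b = snd (eT ! p)"
  define S where "S = {i. (a,i) \<in> (edge_adj rest)\<^sup>*}"
  have bS: "b \<notin> S" using ac p unfolding acyclic_graph_def S_def a_def b_def rest_def by auto
  have aS: "a \<in> S" unfolding S_def by simp
  have val: "\<And>q. q < m \<Longrightarrow> fst (eT ! q) < n \<and> snd (eT ! q) < n \<and> fst (eT ! q) \<noteq> snd (eT ! q)"
  proof -
    fix q assume "q < m"
    hence "eT ! q \<in> set eT" unfolding m_def by simp
    thus "fst (eT ! q) < n \<and> snd (eT ! q) < n \<and> fst (eT ! q) \<noteq> snd (eT ! q)"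
      using valid by (auto simp: case_prod_beta)
  qed
  have key: "fst (eT ! q) \<in> S \<longleftrightarrow> snd (eT ! q) \<in> S" if "q < m" "q \<noteq> p" for q
  proof -
    obtain x y where xy: "eT ! q = (x,y)" by fastforce
    have "(x,y) \<in> set rest" using nth_in_rest[of q eT p] that xy unfolding rest_def m_def by simp
    hence e1: "(x,y) \<in> edge_adj rest" and e2: "(y,x) \<in> edge_adj rest" unfolding edge_adj_def by auto
    show ?thesis unfolding xy S_def using e1 e2
      by (auto intro: rtrancl_into_rtrancl)
  qed
  define T where "T = S \<inter> {..<n}"
  have inner: "(\<Sum>i\<in>T. incidence n eT $$ (i,q)) = (if q = p then 1 else 0)" if q: "q < m" for q
  proof -
    have "(\<Sum>i\<in>T. incidence n eT $$ (i,q)) =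
       (\<Sum>i\<in>T. (if fst (eT ! q) = i then 1 else if snd (eT ! q) = i then -1 else 0))"
      by (rule sum.cong) (use q in \<open>auto simp: T_def m_def\<close>)
    also have "\<dots> = (if fst (eT ! q) \<in> T then 1 else 0) - (if snd (eT ! q) \<in> T then 1 else 0)"
      by (rule sum_edge_ind) (use val[OF q] in \<open>auto simp: T_def\<close>)
    also have "\<dots> = (if fst (eT ! q) \<in> S then 1 else 0) - (if snd (eT ! q) \<in> S then 1 else 0)"
      using val[OF q] by (simp add: T_def)
    also have "\<dots> = (if q = p then 1 else 0)"
      using key[OF q] aS bS by (auto simp: a_def b_def)
    finally show ?thesis .
  qed
  have "0 = (\<Sum>i\<in>T. (incidence n eT *\<^sub>v z) $ i)"
    using Ez by (simp add: T_def)
  also have "\<dots> = (\<Sum>i\<in>T. \<Sum>q<m. incidence n eT $$ (i,q) * z $ q)"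
    by (rule sum.cong) (use z in \<open>auto simp: T_def scalar_prod_def m_def atLeast0LessThan\<close>)
  also have "\<dots> = (\<Sum>q<m. \<Sum>i\<in>T. incidence n eT $$ (i,q) * z $ q)"
    by (rule sum.swap)
  also have "\<dots> = (\<Sum>q<m. (\<Sum>i\<in>T. incidence n eT $$ (i,q)) * z $ q)"
    by (simp add: sum_distrib_right)
  also have "\<dots> = (\<Sum>q<m. (if q = p then z $ q else 0))"
    by (rule sum.cong) (auto simp: inner)
  also have "\<dots> = z $ p" using p by (simp add: m_def)
  finally show "z $ p = 0\<^sub>v (length eT) $ p" using p by simp
qed (use z in simp)

definition dvec :: "nat \<Rightarrow> nat \<Rightarrow> nat \<Rightarrow> real vec" where
  "dvec n a b = vec n (\<lambda>i. (if i = a then 1 else 0) - (if i = b then 1 else 0))"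

lemma inc_unit:
  assumes "q < length es" "fst (es ! q) \<noteq> snd (es ! q)"
  shows "incidence n es *\<^sub>v unit_vec (length es) q = dvec n (fst (es ! q)) (snd (es ! q))"
  by (rule eq_vecI) (use assms in \<open>auto simp: dvec_def\<close>)

lemma path_range:
  assumes valid: "\<forall>(u,v)\<in>set eT. u<n \<and> v<n \<and> u\<noteq>v"
    and ab: "(a,b) \<in> (edge_adj eT)\<^sup>*"
  shows "\<exists>z \<in> carrier_vec (length eT). incidence n eT *\<^sub>v z = dvec n a b"
  using ab
proof (induction rule: rtrancl_induct)
  case base
  have "incidence n eT *\<^sub>v 0\<^sub>v (length eT) = dvec n a a"
    by (rule eq_vecI) (auto simp: dvec_def)
  then show ?case by (intro bexI[of _ "0\<^sub>v (length eT)"]) auto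
next
  case (step b c)
  from step.IH obtain z where z: "z \<in> carrier_vec (length eT)"
    and Ez: "incidence n eT *\<^sub>v z = dvec n a b" by blast
  let ?E = "incidence n eT"
  let ?m = "length eT"
  have E: "?E \<in> carrier_mat n ?m" by simp
  from step.hyps(2) have "(b,c) \<in> set eT \<or> (c,b) \<in> set eT" unfolding edge_adj_def by auto
  then show ?case
  proof
    assume "(b,c) \<in> set eT"
    then obtain q where q: "q < ?m" "eT ! q = (b,c)" by (auto simp: in_set_conv_nth)
    have bc: "b \<noteq> c" using valid q by (metis (mono_tags, lifting) case_prodD nth_mem)
    have "?E *\<^sub>v (z + unit_vec ?m q) = ?E *\<^sub>v z + ?E *\<^sub>v unit_vec ?m q"
      by (rule mult_add_distrib_mat_vec[OF E z]) simp
    also have "\<dots> = dvec n a c" unfolding Ez inc_unit[of q eT, OF q(1)] using q bc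
      by (intro eq_vecI) (auto simp: dvec_def)
    finally show ?thesis using z by (intro bexI[of _ "z + unit_vec ?m q"]) auto
  next
    assume "(c,b) \<in> set eT"
    then obtain q where q: "q < ?m" "eT ! q = (c,b)" by (auto simp: in_set_conv_nth)
    have bc: "b \<noteq> c" using valid q by (metis (mono_tags, lifting) case_prodD nth_mem)
    have "?E *\<^sub>v (z - unit_vec ?m q) = ?E *\<^sub>v z - ?E *\<^sub>v unit_vec ?m q"
      by (rule mult_minus_distrib_mat_vec[OF E z]) simp
    also have "\<dots> = dvec n a c" unfolding Ez inc_unit[of q eT, OF q(1)] using q bc
      by (intro eq_vecI) (auto simp: dvec_def)
    finally show ?thesis using z by (intro bexI[of _ "z - unit_vec ?m q"]) auto
  qed
qed

lemma exists_Z: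
  assumes valid: "\<forall>(u,v)\<in>set eT. u<n \<and> v<n \<and> u\<noteq>v"
    and conn: "graph_connected n eT"
    and validC: "\<forall>(u,v)\<in>set eC. u<n \<and> v<n \<and> u\<noteq>v"
  shows "\<exists>Z \<in> carrier_mat (length eT) (length eC). incidence n eT * Z = incidence n eC"
proof -
  let ?m = "length eT"
  have ex: "\<exists>z \<in> carrier_vec ?m. incidence n eT *\<^sub>v z = dvec n (fst (eC ! j)) (snd (eC ! j))"
    if j: "j < length eC" for j
  proof -
    have "eC ! j \<in> set eC" using j by simp
    then have "fst (eC ! j) < n" "snd (eC ! j) < n" using validC by (auto simp: case_prod_beta)
    then have "(fst (eC ! j), snd (eC ! j)) \<in> (edge_adj eT)\<^sup>*" using conn
      unfolding graph_connected_def by blast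
    then show ?thesis by (rule path_range[OF valid])
  qed
  define zf where "zf j = (SOME z. z \<in> carrier_vec ?m \<and>
      incidence n eT *\<^sub>v z = dvec n (fst (eC ! j)) (snd (eC ! j)))" for j
  have zf: "zf j \<in> carrier_vec ?m \<and> incidence n eT *\<^sub>v zf j = dvec n (fst (eC ! j)) (snd (eC ! j))"
    if "j < length eC" for j
    unfolding zf_def by (rule someI_ex) (use ex[OF that] in blast)
  define Z where "Z = mat ?m (length eC) (\<lambda>(p,j). zf j $ p)"
  have colZ: "col Z j = zf j" if "j < length eC" for j
    using zf[OF that] that by (intro eq_vecI) (auto simp: Z_def)
  have "incidence n eT * Z = incidence n eC"
  proof (rule eq_matI)
    fix i j assume ij: "i < dim_row (incidence n eC)" "j < dim_col (incidence n eC)"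
    then have i: "i < n" and j: "j < length eC" by auto
    have "(incidence n eT * Z) $$ (i,j) = row (incidence n eT) i \<bullet> zf j"
      using i j colZ[OF j] by (simp add: Z_def)
    also have "\<dots> = (incidence n eT *\<^sub>v zf j) $ i" using i by simp
    also have "\<dots> = dvec n (fst (eC ! j)) (snd (eC ! j)) $ i" using zf[OF j] by simp
    also have "\<dots> = incidence n eC $$ (i,j)"
    proof -
      have "eC ! j \<in> set eC" using j by simp
      then have "fst (eC ! j) \<noteq> snd (eC ! j)" using validC by (auto simp: case_prod_beta)
      then show ?thesis using i j by (auto simp: dvec_def)
    qed
    finally show "(incidence n eT * Z) $$ (i,j) = incidence n eC $$ (i,j)" .
  qed (auto simp: Z_def)
  moreover have "Z \<in> carrier_mat ?m (length eC)" by (simp add: Z_def)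
  ultimately show ?thesis by blast
qed

lemma minv_eq:
  assumes A: "A \<in> carrier_mat a a" and B: "B \<in> carrier_mat a a"
    and AB: "A * B = 1\<^sub>m a" and BA: "B * A = 1\<^sub>m a"
  shows "minv A = B"
  unfolding minv_def
proof (rule the_equality)
  show "B \<in> carrier_mat (dim_row A) (dim_row A) \<and> A * B = 1\<^sub>m (dim_row A) \<and> B * A = 1\<^sub>m (dim_row A)"
    using A B AB BA by auto
next
  fix C assume "C \<in> carrier_mat (dim_row A) (dim_row A) \<and> A * C = 1\<^sub>m (dim_row A) \<and> C * A = 1\<^sub>m (dim_row A)"
  hence C: "C \<in> carrier_mat a a" and CA: "C * A = 1\<^sub>m a" using A by auto
  have "C = C * (A * B)" using C AB by simp
  also have "\<dots> = (C * A) * B" using A B C by simp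
  also have "\<dots> = B" using CA B by simp
  finally show "C = B" .
qed

lemma det_nonzero_inv:
  assumes A: "(A::real mat) \<in> carrier_mat a a" and d: "det A \<noteq> 0"
  shows "\<exists>B \<in> carrier_mat a a. A * B = 1\<^sub>m a \<and> B * A = 1\<^sub>m a"
proof -
  have "A \<in> Units (ring_mat TYPE(real) a ())" by (rule det_non_zero_imp_unit[OF A d])
  then show ?thesis unfolding Units_def ring_mat_simps by auto
qed

lemma inv_invertible:
  assumes A: "(A::real mat) \<in> carrier_mat a a" and B: "B \<in> carrier_mat a a"
    and AB: "A * B = 1\<^sub>m a" and BA: "B * A = 1\<^sub>m a"
  shows "invertible_mat A"
  unfolding invertible_mat_def inverts_mat_def square_mat.simps using A B AB BA by auto

lemma append_cols_carrier[simp]: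
  "append_cols A B \<in> carrier_mat (dim_row A) (dim_col A + dim_col B)"
  unfolding append_cols_def by auto

lemma append_cols_dims[simp]:
  "dim_row (append_cols A B) = dim_row A" "dim_col (append_cols A B) = dim_col A + dim_col B"
  unfolding append_cols_def by auto

lemma mult_append_cols:
  assumes A: "A \<in> carrier_mat r a" and B: "B \<in> carrier_mat a b" and C: "C \<in> carrier_mat a c"
  shows "A * append_cols B C = append_cols (A * B) (A * C)"
proof (rule eq_matI)
  fix i j assume "i < dim_row (append_cols (A * B) (A * C))" "j < dim_col (append_cols (A * B) (A * C))"
  hence i: "i < r" and j: "j < b + c" using A B C by auto
  have colj: "col (append_cols B C) j = (if j < b then col B j else col C (j - b))"
    using B C j by (intro eq_vecI) (auto simp: append_cols_def)
  show "(A * append_cols B C) $$ (i, j) = append_cols (A * B) (A * C) $$ (i, j)"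
    using i j A B C colj by (auto simp: append_cols_def)
qed (use A B C in auto)

lemma incidence_append:
  "incidence n (eT @ eC) = append_cols (incidence n eT) (incidence n eC)"
  by (rule eq_matI) (auto simp: append_cols_def incidence_def nth_append)

lemma self_scalar_zero:
  assumes y: "(y::real vec) \<in> carrier_vec n" and yy: "y \<bullet> y = 0"
  shows "y = 0\<^sub>v n"
proof (rule eq_vecI)
  have "(\<Sum>i\<in>{0..<n}. y $ i * y $ i) = 0" using yy y by (simp add: scalar_prod_def)
  then have "\<forall>i\<in>{0..<n}. y $ i * y $ i = 0"
    by (subst sum_nonneg_eq_0_iff[symmetric]) auto
  then show "\<And>i. i < dim_vec (0\<^sub>v n) \<Longrightarrow> y $ i = 0\<^sub>v n $ i" by auto
qed (use y in auto)

lemma Le_det: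
  assumes ac: "acyclic_graph eT" and valid: "\<forall>(u,v)\<in>set eT. u<n \<and> v<n \<and> u\<noteq>v"
  shows "det (edge_laplacian_T n eT) \<noteq> 0"
proof
  let ?E = "incidence n eT" and ?m = "length eT"
  have E: "?E \<in> carrier_mat n ?m" by simp
  have Le: "edge_laplacian_T n eT \<in> carrier_mat ?m ?m" unfolding edge_laplacian_T_def
    by (rule mult_carrier_mat[of _ _ n]) auto
  assume "det (edge_laplacian_T n eT) = 0"
  then obtain z where z: "z \<in> carrier_vec ?m" "z \<noteq> 0\<^sub>v ?m" and Lz: "edge_laplacian_T n eT *\<^sub>v z = 0\<^sub>v ?m"
    unfolding det_0_iff_vec_prod_zero[OF Le] by blast
  define y where "y = ?E *\<^sub>v z"
  have y: "y \<in> carrier_vec n" unfolding y_def by (rule mult_mat_vec_carrier[OF E z(1)])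
  have "transpose_mat ?E *\<^sub>v y = 0\<^sub>v ?m"
    using Lz E z unfolding y_def edge_laplacian_T_def
    by (metis assoc_mult_mat_vec transpose_carrier_mat)
  then have "(transpose_mat ?E *\<^sub>v y) \<bullet> z = 0" using z by simp
  moreover have "(transpose_mat ?E *\<^sub>v y) \<bullet> z = y \<bullet> y"
    using transpose_vec_mult_scalar[OF E z(1) y] unfolding y_def by simp
  ultimately have "y = 0\<^sub>v n" using self_scalar_zero[OF y] by simp
  then have "z = 0\<^sub>v ?m" using tree_inj[OF ac valid z(1)] unfolding y_def by simp
  with z(2) show False by simp
qed

lemma mv_zero: "(A::real mat) \<in> carrier_mat a b \<Longrightarrow> A *\<^sub>v 0\<^sub>v b = 0\<^sub>v a"
  by (intro eq_vecI) (auto simp: scalar_prod_def)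

lemma mv3:
  fixes A B C :: "real mat"
  assumes "A \<in> carrier_mat a b" "B \<in> carrier_mat b c" "C \<in> carrier_mat c d" "v \<in> carrier_vec d"
  shows "(A * B * C) *\<^sub>v v = A *\<^sub>v (B *\<^sub>v (C *\<^sub>v v))"
proof -
  have "(A * B * C) *\<^sub>v v = (A * B) *\<^sub>v (C *\<^sub>v v)"
    by (rule assoc_mult_mat_vec) (use assms in auto)
  also have "\<dots> = A *\<^sub>v (B *\<^sub>v (C *\<^sub>v v))"
    by (rule assoc_mult_mat_vec) (use assms in auto)
  finally show ?thesis .
qed

lemma massoc: "dim_col A = dim_row B \<Longrightarrow> dim_col B = dim_row C \<Longrightarrow> A * B * C = A * (B * C)"
  for A B C :: "real mat"
  by (rule assoc_mult_mat[of A "dim_row A" "dim_col A" B "dim_col B" C "dim_col C"]) auto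

lemma mtrans: "dim_col A = dim_row B \<Longrightarrow> transpose_mat (A * B) = transpose_mat B * transpose_mat A"
  for A B :: "real mat"
  by (rule transpose_mult[of A "dim_row A" "dim_col A" B "dim_col B"]) auto

definition penrose :: "real mat \<Rightarrow> real mat \<Rightarrow> bool" where
  "penrose A X \<longleftrightarrow> X \<in> carrier_mat (dim_col A) (dim_row A)
      \<and> A * X * A = A \<and> X * A * X = X
      \<and> transpose_mat (A * X) = A * X \<and> transpose_mat (X * A) = X * A"

lemma penrose_unique:
  assumes X: "penrose A X" and Y: "penrose A Y"
  shows "X = Y"
proof -
  have dX: "dim_row X = dim_col A" "dim_col X = dim_row A" using X unfolding penrose_def by auto
  have dY: "dim_row Y = dim_col A" "dim_col Y = dim_row A" using Y unfolding penrose_def by auto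
  have X1: "A * (X * A) = A" and X2: "X * (A * X) = X" and X3: "transpose_mat (A * X) = A * X"
    and X4: "transpose_mat (X * A) = X * A"
    using X dX unfolding penrose_def by (auto simp: massoc)
  have Y1: "A * (Y * A) = A" and Y2: "Y * (A * Y) = Y" and Y3: "transpose_mat (A * Y) = A * Y"
    and Y4: "transpose_mat (Y * A) = Y * A"
    using Y dY unfolding penrose_def by (auto simp: massoc)
  have AT1: "transpose_mat A = transpose_mat A * (A * Y)"
  proof -
    have "transpose_mat A = transpose_mat ((A * Y) * A)" using Y1 dY by (simp add: massoc)
    also have "\<dots> = transpose_mat A * transpose_mat (A * Y)" using dY by (simp add: mtrans)
    finally show ?thesis using Y3 by simp
  qed
  have AT2: "transpose_mat A = (X * A) * transpose_mat A"
  proof -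
    have "transpose_mat A = transpose_mat (A * (X * A))" using X1 by simp
    also have "\<dots> = transpose_mat (X * A) * transpose_mat A" using dX by (simp add: mtrans)
    finally show ?thesis using X4 by simp
  qed
  have "X = X * transpose_mat (A * X)" using X2 X3 by simp
  also have "\<dots> = X * (transpose_mat X * transpose_mat A)" using dX by (simp add: mtrans)
  also have "\<dots> = X * (transpose_mat X * (transpose_mat A * (A * Y)))" using AT1 by simp
  also have "\<dots> = X * (transpose_mat (A * X) * (A * Y))" using dX dY by (simp add: mtrans massoc)
  also have "\<dots> = X * (A * X) * (A * Y)" using X3 dX dY by (simp add: massoc)
  also have "\<dots> = X * A * Y" using X2 dX dY by (simp add: massoc)
  finally have XX: "X = X * A * Y" .
  have "Y = transpose_mat (Y * A) * Y" using Y2 Y4 dY by (simp add: massoc)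
  also have "\<dots> = (transpose_mat A * transpose_mat Y) * Y" using dY by (simp add: mtrans)
  also have "\<dots> = ((X * A) * transpose_mat A * transpose_mat Y) * Y" using AT2 by simp
  also have "\<dots> = (X * A) * transpose_mat (Y * A) * Y" using dX dY by (simp add: mtrans massoc)
  also have "\<dots> = (X * A) * (Y * A) * Y" using Y4 by simp
  also have "\<dots> = X * A * Y" using Y2 dX dY by (simp add: massoc)
  finally show ?thesis using XX by simp
qed

lemma pinv_eqI: "penrose A X \<Longrightarrow> pinv A = X"
  unfolding pinv_def by (rule the_equality) (auto simp: penrose_def[symmetric] intro: penrose_unique)

lemma pinv_formula:
  fixes ET Li M Mi :: "real mat"
  assumes ET: "ET \<in> carrier_mat n m" and Li: "Li \<in> carrier_mat m m"
    and Li1: "Li * (transpose_mat ET * ET) = 1\<^sub>m m" and Li2: "(transpose_mat ET * ET) * Li = 1\<^sub>m m"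
    and LiT: "transpose_mat Li = Li"
    and M: "M \<in> carrier_mat m m" and Mi: "Mi \<in> carrier_mat m m"
    and M1: "M * Mi = 1\<^sub>m m" and M2: "Mi * M = 1\<^sub>m m"
  shows "penrose (ET * M * transpose_mat ET)
           (transpose_mat (Li * transpose_mat ET) * Mi * (Li * transpose_mat ET))"
proof -
  have d[simp]: "dim_row ET = n" "dim_col ET = m" "dim_row Li = m" "dim_col Li = m"
    "dim_row M = m" "dim_col M = m" "dim_row Mi = m" "dim_col Mi = m"
    using ET Li M Mi by auto
  have r1[simp]: "Li * (transpose_mat ET * (ET * Z)) = Z" if "dim_row Z = m" for Z
  proof -
    have "Li * (transpose_mat ET * (ET * Z)) = (Li * (transpose_mat ET * ET)) * Z"
      using that by (simp add: massoc)
    then show ?thesis using Li1 that by simp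
  qed
  have r2[simp]: "transpose_mat ET * (ET * (Li * Z)) = Z" if "dim_row Z = m" for Z
  proof -
    have "transpose_mat ET * (ET * (Li * Z)) = ((transpose_mat ET * ET) * Li) * Z"
      using that by (simp add: massoc)
    then show ?thesis using Li2 that by simp
  qed
  have r3[simp]: "M * (Mi * Z) = Z" if "dim_row Z = m" for Z
  proof -
    have "M * (Mi * Z) = (M * Mi) * Z" using that by (simp add: massoc)
    then show ?thesis using M1 that by simp
  qed
  have r4[simp]: "Mi * (M * Z) = Z" if "dim_row Z = m" for Z
  proof -
    have "Mi * (M * Z) = (Mi * M) * Z" using that by (simp add: massoc)
    then show ?thesis using M2 that by simp
  qed
  show ?thesis unfolding penrose_def
    by (intro conjI; (rule carrier_matI)?) (simp_all add: massoc mtrans LiT)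
qed

definition ins :: "nat \<Rightarrow> nat \<Rightarrow> nat" where "ins i r = (if r < i then r else Suc r)"

lemma sum_ins:
  assumes i: "i < n"
  shows "(\<Sum>c<n. f c) = f i + (\<Sum>c<n-1. f (ins i c))"
proof -
  have inj: "inj_on (ins i) {..<n-1}" unfolding inj_on_def ins_def by auto
  have img: "ins i ` {..<n-1} = {..<n} - {i}"
  proof
    show "ins i ` {..<n-1} \<subseteq> {..<n} - {i}" using i by (auto simp: ins_def)
  next
    show "{..<n} - {i} \<subseteq> ins i ` {..<n-1}"
    proof
      fix c assume c: "c \<in> {..<n} - {i}"
      show "c \<in> ins i ` {..<n-1}"
      proof (cases "c < i")
        case True then show ?thesis using c i by (intro image_eqI[of _ _ c]) (auto simp: ins_def)
      next
        case False then show ?thesis using c i by (intro image_eqI[of _ _ "c - 1"]) (auto simp: ins_def)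
      qed
    qed
  qed
  have "(\<Sum>c<n. f c) = f i + (\<Sum>c\<in>{..<n} - {i}. f c)"
    using i by (subst sum.remove[of _ i]) auto
  also have "(\<Sum>c\<in>{..<n} - {i}. f c) = (\<Sum>c<n-1. f (ins i c))"
    unfolding img[symmetric] by (subst sum.reindex[OF inj]) simp
  finally show ?thesis .
qed

lemma principal_minor_singular:
  fixes L :: "real mat"
  assumes L: "L \<in> carrier_mat n n" and i: "i < n"
    and L1: "L *\<^sub>v vec n (\<lambda>_. 1) = 0\<^sub>v n" and Ly: "L *\<^sub>v y = 0\<^sub>v n" and y: "y \<in> carrier_vec n"
    and j: "j < n" and yij: "y $ j \<noteq> y $ i"
  shows "poly (char_poly (mat_delete L i i)) 0 = 0"
proof -
  define w where "w = vec n (\<lambda>c. y $ c - y $ i)"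
  have Lw: "(\<Sum>c<n. L $$ (r,c) * w $ c) = 0" if r: "r < n" for r
  proof -
    have "(\<Sum>c<n. L $$ (r,c) * w $ c) = (\<Sum>c<n. L $$ (r,c) * y $ c) - y $ i * (\<Sum>c<n. L $$ (r,c) * 1)"
      by (simp add: w_def algebra_simps sum_subtractf sum_distrib_left)
    also have "(\<Sum>c<n. L $$ (r,c) * y $ c) = (L *\<^sub>v y) $ r"
      using L y r by (simp add: scalar_prod_def atLeast0LessThan)
    also have "(\<Sum>c<n. L $$ (r,c) * 1) = (L *\<^sub>v vec n (\<lambda>_. 1)) $ r"
      using L r by (simp add: scalar_prod_def atLeast0LessThan)
    finally show ?thesis using Ly L1 r by simp
  qed
  define B where "B = mat_delete L i i"
  have B: "B \<in> carrier_mat (n-1) (n-1)" unfolding B_def using L by (simp add: mat_delete_def)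
  define w' where "w' = vec (n-1) (\<lambda>r. w $ ins i r)"
  have w': "w' \<in> carrier_vec (n-1)" unfolding w'_def by simp
  have ins_lt: "ins i r < n" if "r < n - 1" for r using that i by (auto simp: ins_def)
  have Bw: "B *\<^sub>v w' = 0\<^sub>v (n-1)"
  proof (rule eq_vecI)
    fix r assume "r < dim_vec (0\<^sub>v (n-1) :: real vec)"
    hence r: "r < n - 1" by simp
    have "(B *\<^sub>v w') $ r = (\<Sum>c<n-1. L $$ (ins i r, ins i c) * w $ ins i c)"
      using B r L unfolding B_def w'_def
      by (simp add: scalar_prod_def atLeast0LessThan mat_delete_def ins_def)
    also have "\<dots> = (\<Sum>c<n. L $$ (ins i r, c) * w $ c)"
      using sum_ins[OF i, of "\<lambda>c. L $$ (ins i r, c) * w $ c"] i by (simp add: w_def)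
    also have "\<dots> = 0" by (rule Lw[OF ins_lt[OF r]])
    finally show "(B *\<^sub>v w') $ r = 0\<^sub>v (n-1) $ r" using r by simp
  qed (use B in simp)
  have ji: "j \<noteq> i" using yij by auto
  define r where "r = (if j < i then j else j - 1)"
  have r: "r < n - 1" "ins i r = j" using ji j i by (auto simp: r_def ins_def)
  have "w' $ r \<noteq> 0" using r j yij by (simp add: w'_def w_def)
  hence "w' \<noteq> 0\<^sub>v (n-1)" using r by auto
  moreover have "0 \<cdot>\<^sub>v w' = 0\<^sub>v (n-1)" using w' by (intro eq_vecI) auto
  ultimately have "eigenvector B w' 0" using w' Bw B unfolding eigenvector_def by simp
  hence "eigenvalue B 0" unfolding eigenvalue_def by blast
  thus ?thesis using eigenvalue_root_char_poly[OF B] unfolding B_def by simp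
qed

lemma order_contra:
  fixes L :: "real mat"
  assumes L: "L \<in> carrier_mat n n"
    and L1: "L *\<^sub>v vec n (\<lambda>_. 1) = 0\<^sub>v n" and Ly: "L *\<^sub>v y = 0\<^sub>v n" and y: "y \<in> carrier_vec n"
    and nc: "\<And>i. i < n \<Longrightarrow> \<exists>j<n. y $ j \<noteq> y $ i"
  shows "order 0 (char_poly L) \<noteq> 1"
proof
  assume ord: "order 0 (char_poly L) = 1"
  let ?p = "char_poly L"
  have dm: "degree ?p = n" "coeff ?p n = 1" using degree_monic_char_poly[OF L] by auto
  have p0: "?p \<noteq> 0" using dm by auto
  have r: "poly ?p 0 = 0" using ord order_root[of ?p 0] by simp
  have "order 0 ?p = Suc (order 0 (pderiv ?p))" by (rule order_pderiv[OF p0 r])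
  hence od: "order 0 (pderiv ?p) = 0" using ord by simp
  have "poly (pderiv ?p) 0 = (\<Sum>i<n. poly (char_poly (mat_delete L i i)) 0)"
    unfolding pderiv_char_poly[OF L] poly_sum ..
  also have "\<dots> = 0"
  proof (rule sum.neutral, rule ballI)
    fix i assume "i \<in> {..<n}"
    hence i: "i < n" by simp
    from nc[OF i] obtain j where "j < n" "y $ j \<noteq> y $ i" by blast
    thus "poly (char_poly (mat_delete L i i)) 0 = 0"
      by (intro principal_minor_singular[OF L i L1 Ly y]) auto
  qed
  finally have "pderiv ?p = 0" using od order_root by metis
  hence "degree ?p = 0" by (simp add: pderiv_eq_0_iff)
  hence "n = 0" using dm by simp
  hence "poly ?p 0 = 1" using dm by (simp add: poly_0_coeff_0)
  with r show False by simp
qed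

theorem proposition2:
  fixes n :: nat and eT eC :: "(nat \<times> nat) list" and wT wC :: "real list"
  assumes "simple_graph n (eT @ eC)"
    and "length wT = length eT" and "length wC = length eC"
    and "\<forall>w \<in> set (wT @ wC). w \<noteq> 0"
    and "graph_connected n (eT @ eC)"
    and "order 0 (char_poly (laplacian n (eT @ eC) (wT @ wC))) = 1"
    and "spanning_tree n eT"
  shows "invertible_mat (R_TC n eT eC * weight_mat (wT @ wC) * transpose_mat (R_TC n eT eC))
    \<and> invertible_mat (L_ess n eT eC (wT @ wC))
    \<and> pinv (laplacian n (eT @ eC) (wT @ wC)) =
        transpose_mat (left_inv_T n eT)
        * minv (R_TC n eT eC * weight_mat (wT @ wC) * transpose_mat (R_TC n eT eC))
        * left_inv_T n eT
    \<and> pinv (laplacian n (eT @ eC) (wT @ wC)) =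
        transpose_mat (left_inv_T n eT) * minv (L_ess n eT eC (wT @ wC))
        * transpose_mat (incidence n eT)"
proof -
  let ?ws = "wT @ wC"
  define m where "m = length eT"
  define k where "k = length eC"
  note sg = assms(1)[unfolded simple_graph_def]
  have validT: "\<forall>(u,v)\<in>set eT. u<n \<and> v<n \<and> u\<noteq>v" using sg by auto
  have validC: "\<forall>(u,v)\<in>set eC. u<n \<and> v<n \<and> u\<noteq>v" using sg by auto
  have ac: "acyclic_graph eT" and connT: "graph_connected n eT"
    using assms(7) unfolding spanning_tree_def by auto
  define ET where "ET = incidence n eT"
  define EC where "EC = incidence n eC"
  have ET: "ET \<in> carrier_mat n m" unfolding ET_def m_def by simp
  have EC: "EC \<in> carrier_mat n k" unfolding EC_def k_def by simp
  have ETT: "transpose_mat ET \<in> carrier_mat m n" using ET by simp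
  define Le where "Le = edge_laplacian_T n eT"
  have Le_eq: "Le = transpose_mat ET * ET" unfolding Le_def edge_laplacian_T_def ET_def ..
  have Le: "Le \<in> carrier_mat m m" unfolding Le_eq using ET by simp
  have "det Le \<noteq> 0" unfolding Le_def by (rule Le_det[OF ac validT])
  from det_nonzero_inv[OF Le this] obtain Li where Li: "Li \<in> carrier_mat m m"
    and LeLi: "Le * Li = 1\<^sub>m m" and LiLe: "Li * Le = 1\<^sub>m m" by blast
  have minvLe: "minv Le = Li" by (rule minv_eq[OF Le Li LeLi LiLe])
  have LeT: "transpose_mat Le = Le" unfolding Le_eq using ET by (simp add: mtrans)
  have "Le * transpose_mat Li = 1\<^sub>m m"
    using arg_cong[OF LiLe, of transpose_mat] Li Le LeT by (simp add: mtrans)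
  moreover have "transpose_mat Li * Le = 1\<^sub>m m"
    using arg_cong[OF LeLi, of transpose_mat] Li Le LeT by (simp add: mtrans)
  ultimately have "minv Le = transpose_mat Li" using Li Le by (intro minv_eq) auto
  hence LiT: "transpose_mat Li = Li" using minvLe by simp
  obtain Z where Z: "Z \<in> carrier_mat m k" and ETZ: "ET * Z = EC"
    using exists_Z[OF validT connT validC] unfolding ET_def EC_def m_def k_def by blast
  define X where "X = Li * transpose_mat ET * EC"
  have X: "X \<in> carrier_mat m k" unfolding X_def using Li ETT EC by simp
  have ETX: "ET * X = EC"
  proof -
    have "ET * X = ET * (Li * (transpose_mat ET * ET)) * Z"
      unfolding X_def ETZ[symmetric] using ET Li Z by (simp add: massoc)
    also have "\<dots> = EC" using LiLe ET Z ETZ by (simp add: Le_eq)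
    finally show ?thesis .
  qed
  define R where "R = R_TC n eT eC"
  have R_eq: "R = append_cols (1\<^sub>m m) X"
    unfolding R_def R_TC_def X_def minvLe[symmetric] Le_def ET_def EC_def m_def ..
  have R: "R \<in> carrier_mat m (m + k)" unfolding R_eq by (rule carrier_matI) (use X in auto)
  have E_eq: "incidence n (eT @ eC) = ET * R"
    unfolding incidence_append R_eq ET_def[symmetric] EC_def[symmetric]
    using mult_append_cols[OF ET one_carrier_mat X] ET ETX by simp
  define W where "W = weight_mat ?ws"
  have W: "W \<in> carrier_mat (m+k) (m+k)" unfolding W_def weight_mat_def
    using assms(2,3) by (simp add: m_def k_def)
  define M where "M = R * W * transpose_mat R"
  have M: "M \<in> carrier_mat m m" unfolding M_def using R W by simp
  define Lap where "Lap = laplacian n (eT @ eC) ?ws"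
  have Lap_eq: "Lap = ET * M * transpose_mat ET"
    unfolding Lap_def laplacian_def E_eq W_def[symmetric] M_def
    using ET R W by (simp add: massoc mtrans)
  have Lap: "Lap \<in> carrier_mat n n" unfolding Lap_eq using ET M by simp
  have one0: "transpose_mat ET *\<^sub>v vec n (\<lambda>_. c) = 0\<^sub>v m" for c
    unfolding ET_def m_def by (rule inc_col_sum_const[OF validT])
  have L1: "Lap *\<^sub>v vec n (\<lambda>_. 1) = 0\<^sub>v n"
  proof -
    have "Lap *\<^sub>v vec n (\<lambda>_. 1) = ET *\<^sub>v (M *\<^sub>v (transpose_mat ET *\<^sub>v vec n (\<lambda>_. 1)))"
      unfolding Lap_eq by (rule mv3[OF ET M ETT]) simp
    also have "\<dots> = 0\<^sub>v n" unfolding one0 using ET M by (simp add: mv_zero)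
    finally show ?thesis .
  qed
  have detM: "det M \<noteq> 0"
  proof
    assume "det M = 0"
    then obtain z where z: "z \<in> carrier_vec m" "z \<noteq> 0\<^sub>v m" and Mz: "M *\<^sub>v z = 0\<^sub>v m"
      unfolding det_0_iff_vec_prod_zero[OF M] by blast
    define y where "y = ET *\<^sub>v (Li *\<^sub>v z)"
    have y: "y \<in> carrier_vec n" unfolding y_def using ET Li z by simp
    have ETy: "transpose_mat ET *\<^sub>v y = z"
    proof -
      have "transpose_mat ET *\<^sub>v y = (transpose_mat ET * ET * Li) *\<^sub>v z"
        unfolding y_def by (rule mv3[OF ETT ET Li z(1), symmetric])
      also have "\<dots> = z" using LeLi z unfolding Le_eq by simp
      finally show ?thesis .
    qed
    have Ly: "Lap *\<^sub>v y = 0\<^sub>v n"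
    proof -
      have "Lap *\<^sub>v y = ET *\<^sub>v (M *\<^sub>v (transpose_mat ET *\<^sub>v y))"
        unfolding Lap_eq by (rule mv3[OF ET M ETT y])
      also have "\<dots> = 0\<^sub>v n" unfolding ETy Mz using ET by (simp add: mv_zero)
      finally show ?thesis .
    qed
    have nc: "\<exists>j<n. y $ j \<noteq> y $ i" if i: "i < n" for i
    proof (rule ccontr)
      assume "\<not> (\<exists>j<n. y $ j \<noteq> y $ i)"
      hence "y = vec n (\<lambda>_. y $ i)" using y by (intro eq_vecI) auto
      hence "z = 0\<^sub>v m" using ETy one0[of "y $ i"] by simp
      with z(2) show False ..
    qed
    have "order 0 (char_poly Lap) \<noteq> 1" by (rule order_contra[OF Lap L1 Ly y nc])
    with assms(6) show False unfolding Lap_def by simp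
  qed
  from det_nonzero_inv[OF M detM] obtain Mi where Mi: "Mi \<in> carrier_mat m m"
    and MMi: "M * Mi = 1\<^sub>m m" and MiM: "Mi * M = 1\<^sub>m m" by blast
  have minvM: "minv M = Mi" by (rule minv_eq[OF M Mi MMi MiM])
  have invM: "invertible_mat M" by (rule inv_invertible[OF M Mi MMi MiM])
  have Less_eq: "L_ess n eT eC ?ws = Le * M"
    unfolding L_ess_def Le_def[symmetric] M_def R_def W_def ..
  have LessC: "Le * M \<in> carrier_mat m m" using Le M by simp
  have MiLiC: "Mi * Li \<in> carrier_mat m m" using Mi Li by simp
  have inv1: "(Le * M) * (Mi * Li) = 1\<^sub>m m"
  proof -
    have "(Le * M) * (Mi * Li) = Le * (M * Mi) * Li" using Le M Mi Li by (simp add: massoc)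
    thus ?thesis using MMi LeLi Le by simp
  qed
  have inv2: "(Mi * Li) * (Le * M) = 1\<^sub>m m"
  proof -
    have "(Mi * Li) * (Le * M) = Mi * (Li * Le) * M" using Le M Mi Li by (simp add: massoc)
    thus ?thesis using MiM LiLe Mi by simp
  qed
  have minvLess: "minv (Le * M) = Mi * Li" by (rule minv_eq[OF LessC MiLiC inv1 inv2])
  have invLess: "invertible_mat (Le * M)" by (rule inv_invertible[OF LessC MiLiC inv1 inv2])
  have LT: "left_inv_T n eT = Li * transpose_mat ET"
    unfolding left_inv_T_def Le_def[symmetric] minvLe ET_def ..
  have pen: "penrose (ET * M * transpose_mat ET)
           (transpose_mat (Li * transpose_mat ET) * Mi * (Li * transpose_mat ET))"
    by (rule pinv_formula[OF ET Li _ _ LiT M Mi MMi MiM])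
       (use LiLe LeLi in \<open>simp_all add: Le_eq\<close>)
  have P: "pinv Lap = transpose_mat (Li * transpose_mat ET) * Mi * (Li * transpose_mat ET)"
    unfolding Lap_eq by (rule pinv_eqI[OF pen])
  have P2: "transpose_mat (Li * transpose_mat ET) * (Mi * Li) * transpose_mat ET
      = transpose_mat (Li * transpose_mat ET) * Mi * (Li * transpose_mat ET)"
    using ET Li Mi by (simp add: massoc mtrans)
  show ?thesis
    unfolding R_def[symmetric] W_def[symmetric] M_def[symmetric] Lap_def[symmetric]
      Less_eq LT minvM minvLess ET_def[symmetric]
    using invM invLess P P2 by simp
qed

end
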